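(* Let $\psi\in\Gamma_0(\mathbb{R}^n)$ be Legendre, strongly self-concordant on $\operatorname{int}\operatorname{dom}\psi$ with constant $M_\psi>0$, and with $\nabla^2\psi(x)\succ0$ for all $x\in\operatorname{int}\operatorname{dom}\psi$. Let $s\in\operatorname{int}\operatorname{dom}\psi$ and $e\in\mathbb{R}^n$ with $\nabla\psi(s)-e\in\operatorname{int}\operatorname{dom}\psi^*$ and $\sqrt{\langle e,\nabla^2\psi(s)^{-1}e\rangle}<\frac{1}{3M_\psi}$. Then, for $x^+(s):=\nabla\psi^*(\nabla\psi(s)-e)$, $$D_\psi(x^+(s),s)\le2\langle e,\nabla^2\psi(s)^{-1}e\rangle.$$
   Context: $\Gamma_0(\mathbb{R}^n)$: proper lsc convex functions. $\psi$ is Legendre if essentially smooth ($\operatorname{int}\operatorname{dom}\psi\ne\emptyset$, differentiable there, $\|\nabla\psi(z^\nu)\|\to\infty$ whenever $\operatorname{int}\operatorname{dom}\psi\ni z^\nu\to z\in\operatorname{bdry}\operatorname{dom}\psi$) and essentially strictly convex (strictly convex on every convex subset of $\operatorname{dom}\partial\psi$); then $\nabla\psi^*$ is the inverse of $\nabla\psi:\operatorname{int}\operatorname{dom}\psi\to\operatorname{int}\operatorname{dom}\psi^*$. $D_\psi(a,c)=\psi(a)-\psi(c)-\langle\nabla\psi(c),a-c\rangle$ for $a\in\operatorname{dom}\psi$, $c\in\operatorname{int}\operatorname{dom}\psi$. Self-concordance (Nesterov–Nemirovski convention): $h$ is self-concordant with constant $M>0$ on an open set $Q$ if $h\in\mathcal{C}^3(Q)$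 and $|D^3h(x)[u,u,u]|\le2M\langle u,\nabla^2h(x)u\rangle^{3/2}$ for all $x\in Q$, $u\in\mathbb{R}^n$; it is strongly self-concordant on $Q$ if moreover all level sets $\{x\in Q:h(x)\le\alpha\}$ are closed in $\mathbb{R}^n$. *)

theory Defs
  imports "HOL-Analysis.Analysis"
begin

definition edom :: "('a::euclidean_space \<Rightarrow> ereal) \<Rightarrow> 'a set" where
  "edom f = {x. f x < \<infinity>}"

definition proper_fun :: "('a::euclidean_space \<Rightarrow> ereal) \<Rightarrow> bool" where
  "proper_fun f \<longleftrightarrow> (\<forall>x. f x \<noteq> -\<infinity>) \<and> (\<exists>x. f x \<noteq> \<infinity>)"

definition lsc_fun :: "('a::euclidean_space \<Rightarrow> ereal) \<Rightarrow> bool" where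
  "lsc_fun f \<longleftrightarrow> (\<forall>x. f x \<le> Liminf (at x) f)"

definition convex_efun :: "('a::euclidean_space \<Rightarrow> ereal) \<Rightarrow> bool" where
  "convex_efun f \<longleftrightarrow> convex {(x, t::real). f x \<le> ereal t}"

definition Gamma0 :: "('a::euclidean_space \<Rightarrow> ereal) \<Rightarrow> bool" where
  "Gamma0 f \<longleftrightarrow> proper_fun f \<and> lsc_fun f \<and> convex_efun f"

definition fconj :: "('a::euclidean_space \<Rightarrow> ereal) \<Rightarrow> 'a \<Rightarrow> ereal" where
  "fconj f y = (SUP x. ereal (inner y x) - f x)"

text \<open>Gradient (of the real-valued restriction, meaningful at interior points of the domain).\<close>
definition egrad :: "('a::euclidean_space \<Rightarrow> ereal) \<Rightarrow> 'a \<Rightarrow> 'a" where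
  "egrad f x = (SOME g. GDERIV (\<lambda>y. real_of_ereal (f y)) x :> g)"

definition edifferentiable :: "('a::euclidean_space \<Rightarrow> ereal) \<Rightarrow> 'a \<Rightarrow> bool" where
  "edifferentiable f x \<longleftrightarrow> (\<exists>g. GDERIV (\<lambda>y. real_of_ereal (f y)) x :> g)"

definition ehess :: "('a::euclidean_space \<Rightarrow> ereal) \<Rightarrow> 'a \<Rightarrow> ('a \<Rightarrow> 'a)" where
  "ehess f x = (SOME H. (egrad f has_derivative H) (at x))"

definition subdiff :: "('a::euclidean_space \<Rightarrow> ereal) \<Rightarrow> 'a \<Rightarrow> 'a set" where
  "subdiff f x = {g. f x < \<infinity> \<and> (\<forall>y. f x + ereal (inner g (y - x)) \<le> f y)}"

definition dom_subdiff :: "('a::euclidean_space \<Rightarrow> ereal) \<Rightarrow> 'a set" where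
  "dom_subdiff f = {x. subdiff f x \<noteq> {}}"

definition strictly_convex_on_efun :: "'a::euclidean_space set \<Rightarrow> ('a \<Rightarrow> ereal) \<Rightarrow> bool" where
  "strictly_convex_on_efun C f \<longleftrightarrow>
     (\<forall>x\<in>C. \<forall>y\<in>C. \<forall>t::real. x \<noteq> y \<and> 0 < t \<and> t < 1 \<longrightarrow>
        f ((1 - t) *\<^sub>R x + t *\<^sub>R y) < ereal (1 - t) * f x + ereal t * f y)"

definition essentially_smooth :: "('a::euclidean_space \<Rightarrow> ereal) \<Rightarrow> bool" where
  "essentially_smooth f \<longleftrightarrow>
     interior (edom f) \<noteq> {} \<and>
     (\<forall>x\<in>interior (edom f). edifferentiable f x) \<and>
     (\<forall>z z0. (\<forall>k. z k \<in> interior (edom f)) \<longrightarrow> z \<longlonglongrightarrow> z0 \<longrightarrow> z0 \<in> frontier (edom f) \<longrightarrow>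
        filterlim (\<lambda>k. norm (egrad f (z k))) at_top sequentially)"

definition essentially_strictly_convex :: "('a::euclidean_space \<Rightarrow> ereal) \<Rightarrow> bool" where
  "essentially_strictly_convex f \<longleftrightarrow>
     (\<forall>C. convex C \<and> C \<subseteq> dom_subdiff f \<longrightarrow> strictly_convex_on_efun C f)"

definition legendre :: "('a::euclidean_space \<Rightarrow> ereal) \<Rightarrow> bool" where
  "legendre f \<longleftrightarrow> essentially_smooth f \<and> essentially_strictly_convex f"

text \<open>Bregman distance (extended-real valued; equals +\<infinity> if a is outside dom f).\<close>
definition bregman :: "('a::euclidean_space \<Rightarrow> ereal) \<Rightarrow> 'a \<Rightarrow> 'a \<Rightarrow> ereal" where
  "bregman f a c = f a - f c - ereal (inner (egrad f c) (a - c))"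

definition self_concordant_on :: "'a::euclidean_space set \<Rightarrow> ('a \<Rightarrow> real) \<Rightarrow> real \<Rightarrow> bool" where
  "self_concordant_on Q h M \<longleftrightarrow> open Q \<and> M > 0 \<and>
    (\<exists>(D1 :: 'a \<Rightarrow> ('a \<Rightarrow>\<^sub>L real)) (D2 :: 'a \<Rightarrow> ('a \<Rightarrow>\<^sub>L ('a \<Rightarrow>\<^sub>L real)))
       (D3 :: 'a \<Rightarrow> ('a \<Rightarrow>\<^sub>L ('a \<Rightarrow>\<^sub>L ('a \<Rightarrow>\<^sub>L real)))).
       (\<forall>x\<in>Q. (h has_derivative blinfun_apply (D1 x)) (at x)) \<and>
       (\<forall>x\<in>Q. (D1 has_derivative blinfun_apply (D2 x)) (at x)) \<and>
       (\<forall>x\<in>Q. (D2 has_derivative blinfun_apply (D3 x)) (at x)) \<and>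
       continuous_on Q D3 \<and>
       (\<forall>x\<in>Q. \<forall>u. \<bar>blinfun_apply (blinfun_apply (blinfun_apply (D3 x) u) u) u\<bar>
            \<le> 2 * M * (blinfun_apply (blinfun_apply (D2 x) u) u) powr (3/2)))"

definition strongly_self_concordant_on :: "'a::euclidean_space set \<Rightarrow> ('a \<Rightarrow> real) \<Rightarrow> real \<Rightarrow> bool" where
  "strongly_self_concordant_on Q h M \<longleftrightarrow> self_concordant_on Q h M \<and>
     (\<forall>\<alpha>. closed {x\<in>Q. h x \<le> \<alpha>})"

end

theory Submission
  imports Defs
begin

lemma line_deriv:
  fixes F :: "'a::real_normed_vector \<Rightarrow> 'b::real_normed_vector"
  assumes "(F has_derivative F') (at (a + t *\<^sub>R u))"
  shows "((\<lambda>t. F (a + t *\<^sub>R u)) has_vector_derivative F' u) (at t)"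
proof -
  have "((\<lambda>r. a + r *\<^sub>R u) has_derivative (\<lambda>r. r *\<^sub>R u)) (at t)"
    by (intro derivative_eq_intros) auto
  then have "((\<lambda>r. F (a + r *\<^sub>R u)) has_derivative (\<lambda>k. F' (k *\<^sub>R u))) (at t)"
    by (rule has_derivative_compose, simp add: assms)
  moreover have "bounded_linear F'" using assms has_derivative_bounded_linear by blast
  ultimately show ?thesis unfolding has_vector_derivative_def
    by (simp add: linear_simps)
qed

lemma line_deriv_real:
  fixes F :: "'a::real_normed_vector \<Rightarrow> real"
  assumes "(F has_derivative F') (at (a + t *\<^sub>R u))"
  shows "((\<lambda>t. F (a + t *\<^sub>R u)) has_real_derivative F' u) (at t)"
  using line_deriv[OF assms] has_real_derivative_iff_has_vector_derivative by blast

lemma line_deriv_apply: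
  fixes F :: "'a::real_normed_vector \<Rightarrow> ('a \<Rightarrow>\<^sub>L real)"
  assumes "(F has_derivative blinfun_apply (F' )) (at (a + t *\<^sub>R u))"
  shows "((\<lambda>t. blinfun_apply (F (a + t *\<^sub>R u)) v) has_real_derivative blinfun_apply (blinfun_apply F' u) v) (at t)"
proof -
  have "((\<lambda>t. F (a + t *\<^sub>R u)) has_vector_derivative blinfun_apply F' u) (at t)"
    using line_deriv[OF assms] .
  from bounded_linear.has_vector_derivative[OF bounded_bilinear.bounded_linear_left[OF bounded_bilinear_blinfun_apply] this]
  show ?thesis
    using has_real_derivative_iff_has_vector_derivative by auto
qed

lemma line_deriv_apply2:
  fixes F :: "'a::real_normed_vector \<Rightarrow> ('a \<Rightarrow>\<^sub>L ('a \<Rightarrow>\<^sub>L real))"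
  assumes "(F has_derivative blinfun_apply (F' )) (at (a + t *\<^sub>R u))"
  shows "((\<lambda>t. blinfun_apply (blinfun_apply (F (a + t *\<^sub>R u)) v) w) has_real_derivative
     blinfun_apply (blinfun_apply (blinfun_apply F' u) v) w) (at t)"
proof -
  have "((\<lambda>t. F (a + t *\<^sub>R u)) has_vector_derivative blinfun_apply F' u) (at t)"
    using line_deriv[OF assms] .
  from bounded_linear.has_vector_derivative[OF bounded_bilinear.bounded_linear_left[OF bounded_bilinear_blinfun_apply] this]
  have "((\<lambda>t. blinfun_apply (F (a + t *\<^sub>R u)) v) has_vector_derivative blinfun_apply (blinfun_apply F' u) v) (at t)" by simp
  from bounded_linear.has_vector_derivative[OF bounded_bilinear.bounded_linear_left[OF bounded_bilinear_blinfun_apply] this]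
  show ?thesis
    using has_real_derivative_iff_has_vector_derivative by auto
qed

lemma hess_sym_aux:
  fixes f :: "'a::real_normed_vector \<Rightarrow> real"
  assumes U: "open U" "x \<in> U"
    and d1: "\<And>z. z\<in>U \<Longrightarrow> (f has_derivative blinfun_apply (D1 z)) (at z)"
    and d2: "(D1 has_derivative blinfun_apply B) (at x)"
    and e: "e > 0"
  shows "\<exists>d>0. \<forall>t. 0 < t \<and> t < d \<longrightarrow>
     \<bar>(f (x + t *\<^sub>R u + t *\<^sub>R v) - f (x + t *\<^sub>R u) - f (x + t *\<^sub>R v) + f x)
        - t^2 * blinfun_apply (blinfun_apply B u) v\<bar> \<le> e * t^2"
proof -
  define C where "C = (norm u + 2 * norm v) * norm v + 1"
  have C: "C > 0" unfolding C_def by (intro add_nonneg_pos mult_nonneg_nonneg) auto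
  obtain d0 where d0: "d0 > 0" "ball x d0 \<subseteq> U" using U open_contains_ball by blast
  obtain d1 where d1p: "d1 > 0" and d1b: "\<And>y. norm (y - x) < d1 \<Longrightarrow>
      norm (D1 y - D1 x - blinfun_apply B (y - x)) \<le> (e / C) * norm (y - x)"
    using d2[unfolded has_derivative_at_alt] e C by (meson divide_pos_pos)
  define d where "d = min d0 d1 / (norm u + norm v + 1)"
  have npos: "norm u + norm v + 1 > 0" by (smt (verit) norm_ge_zero)
  have dpos: "d > 0" unfolding d_def using d0 d1p npos by simp
  show ?thesis
  proof (intro exI[of _ d] conjI allI impI dpos)
    fix t :: real assume t: "0 < t \<and> t < d"
    have tb: "t * (norm u + norm v) < min d0 d1"
    proof -
      have "t * (norm u + norm v + 1) < min d0 d1" using t npos unfolding d_def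
        by (simp add: pos_less_divide_eq)
      then show ?thesis using t by (simp add: algebra_simps)
    qed
    have inb: "norm (s *\<^sub>R v) < min d0 d1" "norm (t *\<^sub>R u + s *\<^sub>R v) < min d0 d1"
      if "0 \<le> s" "s \<le> t" for s
    proof -
      have "norm (s *\<^sub>R v) \<le> t * norm v" using that by (simp add: mult_right_mono)
      moreover have "norm (t *\<^sub>R u + s *\<^sub>R v) \<le> t * norm u + t * norm v"
        using that t norm_triangle_le[of "t *\<^sub>R u" "s *\<^sub>R v"]
        by (smt (verit, best) mult_right_mono norm_ge_zero norm_scaleR)
      ultimately show "norm (s *\<^sub>R v) < min d0 d1" "norm (t *\<^sub>R u + s *\<^sub>R v) < min d0 d1"
        using tb t by (smt (verit) distrib_left mult_nonneg_nonneg norm_ge_zero)+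
    qed
    have inU: "x + w \<in> U" if "norm w < min d0 d1" for w
      using d0 that by (auto simp: subset_iff dist_norm)
    define g where "g s = f (x + t *\<^sub>R u + s *\<^sub>R v) - f (x + s *\<^sub>R v)" for s
    have gd: "(g has_real_derivative (blinfun_apply (D1 (x + t *\<^sub>R u + s *\<^sub>R v)) v
        - blinfun_apply (D1 (x + s *\<^sub>R v)) v)) (at s)" if "0 \<le> s" "s \<le> t" for s
    proof -
      have "x + t *\<^sub>R u + s *\<^sub>R v \<in> U" using inU[OF inb(2)[OF that]] by (simp add: add.assoc)
      have a: "(f has_derivative blinfun_apply (D1 (x + t *\<^sub>R u + s *\<^sub>R v))) (at (x + t *\<^sub>R u + s *\<^sub>R v))"
        using d1 inU[OF inb(2)[OF that]] by (simp add: add.assoc)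
      have b: "(f has_derivative blinfun_apply (D1 (x + s *\<^sub>R v))) (at (x + s *\<^sub>R v))"
        using d1 inU[OF inb(1)[OF that]] by simp
      show ?thesis unfolding g_def
        by (intro DERIV_diff line_deriv_real a b)
    qed
    obtain z where z: "0 < z" "z < t" and gz: "g t - g 0 = (t - 0) *
        (blinfun_apply (D1 (x + t *\<^sub>R u + z *\<^sub>R v)) v - blinfun_apply (D1 (x + z *\<^sub>R v)) v)"
      using MVT2[of 0 t g "\<lambda>s. blinfun_apply (D1 (x + t *\<^sub>R u + s *\<^sub>R v)) v
        - blinfun_apply (D1 (x + s *\<^sub>R v)) v"] gd t by auto
    define w1 where "w1 = t *\<^sub>R u + z *\<^sub>R v"
    define w2 where "w2 = z *\<^sub>R v"
    have n1: "norm w1 < d1" "norm w2 < d1" using inb[of z] z unfolding w1_def w2_def by auto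
    have n1': "norm w1 \<le> t * norm u + t * norm v" "norm w2 \<le> t * norm v"
    proof -
      show "norm w1 \<le> t * norm u + t * norm v" unfolding w1_def using z t norm_triangle_le[of "t *\<^sub>R u" "z *\<^sub>R v"]
        by (smt (verit, best) mult_right_mono norm_ge_zero norm_scaleR)
      show "norm w2 \<le> t * norm v" unfolding w2_def using z by (simp add: mult_right_mono)
    qed
    define E1 where "E1 = D1 (x + w1) - D1 x - B w1"
    define E2 where "E2 = D1 (x + w2) - D1 x - B w2"
    have E1: "norm E1 \<le> (e / C) * norm w1" using d1b[of "x + w1"] n1 unfolding E1_def by simp
    have E2: "norm E2 \<le> (e / C) * norm w2" using d1b[of "x + w2"] n1 unfolding E2_def by simp
    have lin: "blinfun_apply (B w1) v - blinfun_apply (B w2) v = t * blinfun_apply (B u) v"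
      unfolding w1_def w2_def by (simp add: blinfun.add_right blinfun.scaleR_right blinfun.add_left blinfun.scaleR_left)
    have key: "blinfun_apply (D1 (x + t *\<^sub>R u + z *\<^sub>R v)) v - blinfun_apply (D1 (x + z *\<^sub>R v)) v
        - t * blinfun_apply (B u) v = blinfun_apply E1 v - blinfun_apply E2 v"
      unfolding E1_def E2_def w1_def w2_def by (simp add: blinfun.diff_left blinfun.add_left add.assoc
        blinfun.add_right blinfun.scaleR_right blinfun.scaleR_left)
    have a1: "\<bar>blinfun_apply E1 v\<bar> \<le> norm E1 * norm v" using norm_blinfun[of E1 v] by simp
    have a2: "\<bar>blinfun_apply E2 v\<bar> \<le> norm E2 * norm v" using norm_blinfun[of E2 v] by simp
    have ec: "e / C \<ge> 0" using e C by simp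
    have b1: "norm E1 \<le> (e / C) * (t * norm u + t * norm v)"
      using E1 n1'(1) ec by (meson mult_left_mono order_trans)
    have b2: "norm E2 \<le> (e / C) * (t * norm v)"
      using E2 n1'(2) ec by (meson mult_left_mono order_trans)
    have c1: "norm E1 * norm v \<le> (e / C) * (t * norm u + t * norm v) * norm v"
      by (rule mult_right_mono[OF b1 norm_ge_zero])
    have c2: "norm E2 * norm v \<le> (e / C) * (t * norm v) * norm v"
      by (rule mult_right_mono[OF b2 norm_ge_zero])
    have "\<bar>blinfun_apply E1 v - blinfun_apply E2 v\<bar> \<le> (e / C) * (t * norm u + t * norm v) * norm v + (e / C) * (t * norm v) * norm v"
      using a1 a2 c1 c2 by linarith
    also have "\<dots> = (e / C) * t * ((norm u + 2 * norm v) * norm v)" by (simp add: algebra_simps)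
    also have "\<dots> \<le> (e / C) * t * C" unfolding C_def using e t
      by (intro mult_left_mono) auto
    also have "\<dots> = e * t" using C by simp
    finally have bd: "\<bar>blinfun_apply E1 v - blinfun_apply E2 v\<bar> \<le> e * t" .
    define Dl where "Dl = f (x + t *\<^sub>R u + t *\<^sub>R v) - f (x + t *\<^sub>R u) - f (x + t *\<^sub>R v) + f x"
    define G1 where "G1 = blinfun_apply (D1 (x + t *\<^sub>R u + z *\<^sub>R v)) v"
    define G2 where "G2 = blinfun_apply (D1 (x + z *\<^sub>R v)) v"
    define BB where "BB = blinfun_apply (blinfun_apply B u) v"
    have gdl: "g t - g 0 = Dl" unfolding g_def Dl_def by simp
    have D: "Dl = t * (G1 - G2)" using gz gdl unfolding G1_def G2_def by simp
    have "Dl - t^2 * BB = t * (G1 - G2 - t * BB)" unfolding D by (simp add: power2_eq_square right_diff_distrib)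
    also have "\<dots> = t * (blinfun_apply E1 v - blinfun_apply E2 v)" using key unfolding G1_def G2_def BB_def by simp
    finally have "\<bar>Dl - t^2 * BB\<bar> = t * \<bar>blinfun_apply E1 v - blinfun_apply E2 v\<bar>"
      using t by (simp add: abs_mult)
    also have "\<dots> \<le> t * (e * t)" using bd t by (intro mult_left_mono) auto
    finally show "\<bar>(f (x + t *\<^sub>R u + t *\<^sub>R v) - f (x + t *\<^sub>R u) - f (x + t *\<^sub>R v) + f x)
        - t^2 * blinfun_apply (blinfun_apply B u) v\<bar> \<le> e * t^2"
      unfolding Dl_def[symmetric] BB_def[symmetric] by (simp add: power2_eq_square algebra_simps)
  qed
qed

lemma hess_sym:
  fixes f :: "'a::real_normed_vector \<Rightarrow> real"
  assumes U: "open U" "x \<in> U"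
    and d1: "\<And>z. z\<in>U \<Longrightarrow> (f has_derivative blinfun_apply (D1 z)) (at z)"
    and d2: "(D1 has_derivative blinfun_apply B) (at x)"
  shows "blinfun_apply (blinfun_apply B u) v = blinfun_apply (blinfun_apply B v) u"
proof (rule ccontr)
  assume ne: "blinfun_apply (blinfun_apply B u) v \<noteq> blinfun_apply (blinfun_apply B v) u"
  define e where "e = \<bar>blinfun_apply (blinfun_apply B u) v - blinfun_apply (blinfun_apply B v) u\<bar> / 4"
  have e: "e > 0" using ne unfolding e_def by simp
  obtain da where da: "da > 0" "\<forall>t. 0 < t \<and> t < da \<longrightarrow>
     \<bar>(f (x + t *\<^sub>R u + t *\<^sub>R v) - f (x + t *\<^sub>R u) - f (x + t *\<^sub>R v) + f x)
        - t^2 * blinfun_apply (blinfun_apply B u) v\<bar> \<le> e * t^2"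
    using hess_sym_aux[OF U d1 d2 e] by blast
  obtain db where db: "db > 0" "\<forall>t. 0 < t \<and> t < db \<longrightarrow>
     \<bar>(f (x + t *\<^sub>R v + t *\<^sub>R u) - f (x + t *\<^sub>R v) - f (x + t *\<^sub>R u) + f x)
        - t^2 * blinfun_apply (blinfun_apply B v) u\<bar> \<le> e * t^2"
    using hess_sym_aux[OF U d1 d2 e] by blast
  define t where "t = min da db / 2"
  have t: "0 < t" "t < da" "t < db" using da db unfolding t_def by auto
  have eq: "x + t *\<^sub>R v + t *\<^sub>R u = x + t *\<^sub>R u + t *\<^sub>R v" by (simp add: algebra_simps)
  have "\<bar>t^2 * blinfun_apply (blinfun_apply B u) v - t^2 * blinfun_apply (blinfun_apply B v) u\<bar> \<le> 2 * e * t^2"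
    using da(2)[rule_format, of t] db(2)[rule_format, of t] t unfolding eq by (simp add: abs_le_iff)
  then have "\<bar>t^2 * (blinfun_apply (blinfun_apply B u) v - blinfun_apply (blinfun_apply B v) u)\<bar> \<le> 2 * e * t^2"
    by (simp only: right_diff_distrib)
  then have "t^2 * \<bar>blinfun_apply (blinfun_apply B u) v - blinfun_apply (blinfun_apply B v) u\<bar> \<le> t^2 * (2 * e)"
    by (simp add: abs_mult mult.commute)
  then have "\<bar>blinfun_apply (blinfun_apply B u) v - blinfun_apply (blinfun_apply B v) u\<bar> \<le> 2 * e"
    using t by (simp add: mult_le_cancel_left)
  then show False using e unfolding e_def by simp
qed

locale scf =
  fixes U :: "'a::euclidean_space set" and f :: "'a \<Rightarrow> real" and M :: real
    and D1 :: "'a \<Rightarrow> ('a \<Rightarrow>\<^sub>L real)"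
    and D2 :: "'a \<Rightarrow> ('a \<Rightarrow>\<^sub>L ('a \<Rightarrow>\<^sub>L real))"
    and D3 :: "'a \<Rightarrow> ('a \<Rightarrow>\<^sub>L ('a \<Rightarrow>\<^sub>L ('a \<Rightarrow>\<^sub>L real)))"
  assumes U_open: "open U" and U_convex: "convex U" and Mpos: "M > 0"
    and d1: "\<And>x. x \<in> U \<Longrightarrow> (f has_derivative blinfun_apply (D1 x)) (at x)"
    and d2: "\<And>x. x \<in> U \<Longrightarrow> (D1 has_derivative blinfun_apply (D2 x)) (at x)"
    and d3: "\<And>x. x \<in> U \<Longrightarrow> (D2 has_derivative blinfun_apply (D3 x)) (at x)"
    and sc: "\<And>x u. x \<in> U \<Longrightarrow> \<bar>blinfun_apply (blinfun_apply (blinfun_apply (D3 x) u) u) u\<bar>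
            \<le> 2 * M * (blinfun_apply (blinfun_apply (D2 x) u) u) powr (3/2)"
    and pd: "\<And>x u. x \<in> U \<Longrightarrow> u \<noteq> 0 \<Longrightarrow> blinfun_apply (blinfun_apply (D2 x) u) u > 0"
begin

abbreviation Q where "Q x u v \<equiv> blinfun_apply (blinfun_apply (D2 x) u) v"
abbreviation G where "G x u \<equiv> blinfun_apply (D1 x) u"

lemma Qsym: "x \<in> U \<Longrightarrow> Q x u v = Q x v u"
  using hess_sym[OF U_open _ d1 d2] by blast

lemma seg: assumes "a \<in> U" "a + u \<in> U" "0 \<le> t" "t \<le> 1" shows "a + t *\<^sub>R u \<in> U"
proof -
  have "a + t *\<^sub>R u = (1 - t) *\<^sub>R a + t *\<^sub>R (a + u)" by (simp add: algebra_simps)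
  then show ?thesis using convexD[OF U_convex assms(1,2)] assms(3,4) by simp
qed

lemma Q_scale: "Q x (c *\<^sub>R u) (c *\<^sub>R u) = c^2 * Q x u u"
  by (simp add: blinfun.scaleR_left blinfun.scaleR_right power2_eq_square)

lemma Q_nonneg: "x \<in> U \<Longrightarrow> Q x u u \<ge> 0"
  using pd[of x u] by (cases "u = 0") (auto simp: blinfun.zero_left blinfun.zero_right)

lemma segQ:
  assumes a: "a \<in> U" "a + u \<in> U" and u: "u \<noteq> 0" and t: "0 \<le> t" "t \<le> 1"
  shows "Q (a + t *\<^sub>R u) u u \<ge> Q a u u / (1 + M * sqrt (Q a u u) * t)^2"
proof -
  define q where "q \<tau> = Q (a + \<tau> *\<^sub>R u) u u" for \<tau>
  define q' where "q' \<tau> = blinfun_apply (blinfun_apply (blinfun_apply (D3 (a + \<tau> *\<^sub>R u)) u) u) u" for \<tau>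
  have qpos: "q \<tau> > 0" if "0 \<le> \<tau>" "\<tau> \<le> 1" for \<tau>
    unfolding q_def using pd[OF seg[OF a that] u] .
  have qd: "(q has_real_derivative q' \<tau>) (at \<tau>)" if "0 \<le> \<tau>" "\<tau> \<le> 1" for \<tau>
    unfolding q_def q'_def by (rule line_deriv_apply2[OF d3[OF seg[OF a that]]])
  have qb: "\<bar>q' \<tau>\<bar> \<le> 2 * M * (q \<tau> * sqrt (q \<tau>))" if "0 \<le> \<tau>" "\<tau> \<le> 1" for \<tau>
  proof -
    have "q \<tau> powr (3/2) = q \<tau> powr (1 + 1/2)" by simp
    also have "\<dots> = q \<tau> * sqrt (q \<tau>)" using qpos[OF that]
      by (simp only: powr_add powr_one powr_half_sqrt less_imp_le)
    finally have e1: "q \<tau> powr (3/2) = q \<tau> * sqrt (q \<tau>)" .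
    have "\<bar>q' \<tau>\<bar> \<le> 2 * M * (q \<tau> powr (3/2))" using sc[OF seg[OF a that], of u] unfolding q_def q'_def .
    then show ?thesis unfolding e1 .
  qed
  define w where "w \<tau> = inverse (sqrt (q \<tau>))" for \<tau>
  have wd: "(w has_real_derivative (- q' \<tau> / (2 * (q \<tau> * sqrt (q \<tau>))))) (at \<tau>)" if "0 \<le> \<tau>" "\<tau> \<le> 1" for \<tau>
  proof -
    have p: "q \<tau> > 0" using qpos[OF that] .
    have s1: "((\<lambda>\<tau>. sqrt (q \<tau>)) has_real_derivative (inverse (sqrt (q \<tau>)) / 2 * q' \<tau>)) (at \<tau>)"
      by (rule DERIV_chain2[OF DERIV_real_sqrt[OF p] qd[OF that]])
    have s2: "(w has_real_derivative - ((inverse (sqrt (q \<tau>)) / 2 * q' \<tau>) * inverse ((sqrt (q \<tau>)) ^ Suc (Suc 0)))) (at \<tau>)"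
      unfolding w_def by (rule DERIV_inverse_fun[OF s1]) (use p in simp)
    show ?thesis
      by (rule DERIV_cong[OF s2]) (use p in \<open>simp add: field_simps\<close>)
  qed
  have wb: "- q' \<tau> / (2 * (q \<tau> * sqrt (q \<tau>))) \<le> M" if "0 \<le> \<tau>" "\<tau> \<le> 1" for \<tau>
  proof -
    have p: "2 * (q \<tau> * sqrt (q \<tau>)) > 0" using qpos[OF that] by simp
    have h: "- q' \<tau> \<le> 2 * M * (q \<tau> * sqrt (q \<tau>))" using qb[OF that] by linarith
    have "M * (2 * (q \<tau> * sqrt (q \<tau>))) = 2 * M * (q \<tau> * sqrt (q \<tau>))" by simp
    then show ?thesis by (subst pos_divide_le_eq[OF p]) (use h in linarith)
  qed
  have mono: "M * 0 - w 0 \<le> M * t - w t"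
  proof (rule DERIV_nonneg_imp_nondecreasing[OF t(1)])
    fix x assume x: "0 \<le> x" "x \<le> t"
    show "\<exists>y. ((\<lambda>\<tau>. M * \<tau> - w \<tau>) has_real_derivative y) (at x) \<and> 0 \<le> y"
    proof (intro exI conjI)
      show "((\<lambda>\<tau>. M * \<tau> - w \<tau>) has_real_derivative (M * 1 - (- q' x / (2 * (q x * sqrt (q x)))))) (at x)"
        using DERIV_diff[OF DERIV_cmult[OF DERIV_ident] wd[of x]] x t by simp
      show "0 \<le> M * 1 - (- q' x / (2 * (q x * sqrt (q x))))" using wb[of x] x t by simp
    qed
  qed
  define r where "r = sqrt (q 0)"
  have r: "r > 0" unfolding r_def using qpos[of 0] by simp
  have qt: "q t > 0" using qpos t by simp
  have "inverse (sqrt (q t)) \<le> inverse r + M * t" using mono unfolding w_def r_def by simp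
  also have "\<dots> = (1 + M * r * t) / r" using r by (simp add: field_simps)
  finally have i1: "inverse (sqrt (q t)) \<le> (1 + M * r * t) / r" .
  have pos1: "1 + M * r * t > 0" using Mpos r t by (simp add: add_pos_nonneg)
  have "r / (1 + M * r * t) \<le> sqrt (q t)"
    using i1 r qt pos1 by (simp add: field_simps)
  then have "(r / (1 + M * r * t))^2 \<le> (sqrt (q t))^2"
    using r pos1 by (intro power_mono) auto
  then have "q 0 / (1 + M * r * t)^2 \<le> q t"
    using qt qpos[of 0] by (simp add: power_divide r_def)
  then show ?thesis unfolding q_def r_def by simp
qed


lemma gradmono:
  assumes a: "a \<in> U" "a + u \<in> U"
  shows "G (a + u) u - G a u \<ge> Q a u u / (1 + M * sqrt (Q a u u))"
proof (cases "u = 0")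
  case True then show ?thesis by (simp add: blinfun.zero_right blinfun.zero_left)
next
  case False
  define c where "c = Q a u u"
  define r where "r = sqrt c"
  have c: "c > 0" using pd[OF a(1) False] c_def by simp
  have r: "r > 0" using c r_def by simp
  define k where "k \<tau> = G (a + \<tau> *\<^sub>R u) u - c * \<tau> / (1 + M * r * \<tau>)" for \<tau>
  have "k 0 \<le> k 1"
  proof (rule DERIV_nonneg_imp_nondecreasing[of 0 1])
    fix x :: real assume x: "0 \<le> x" "x \<le> 1"
    have p: "1 + M * r * x > 0" using Mpos r x by (simp add: add_pos_nonneg)
    have dG: "((\<lambda>\<tau>. G (a + \<tau> *\<^sub>R u) u) has_real_derivative Q (a + x *\<^sub>R u) u u) (at x)"
      by (rule line_deriv_apply[OF d2[OF seg[OF a x]]])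
    have dR0: "((\<lambda>\<tau>. c * \<tau> / (1 + M * r * \<tau>)) has_real_derivative
        ((c * 1) * (1 + M * r * x) - (c * x) * (0 + M * r * 1)) / ((1 + M * r * x) * (1 + M * r * x))) (at x)"
      by (rule DERIV_divide[OF DERIV_cmult[OF DERIV_ident] DERIV_add[OF DERIV_const DERIV_cmult[OF DERIV_ident]]])
        (use p in simp)
    have dR: "((\<lambda>\<tau>. c * \<tau> / (1 + M * r * \<tau>)) has_real_derivative c / (1 + M * r * x)^2) (at x)"
      by (rule DERIV_cong[OF dR0]) (use p in \<open>simp add: field_simps power2_eq_square\<close>)
    have dk: "(k has_real_derivative (Q (a + x *\<^sub>R u) u u - c / (1 + M * r * x)^2)) (at x)"
      unfolding k_def by (rule DERIV_diff[OF dG dR])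
    have "Q (a + x *\<^sub>R u) u u \<ge> c / (1 + M * r * x)^2"
      using segQ[OF a False x] unfolding c_def r_def by simp
    then show "\<exists>y. (k has_real_derivative y) (at x) \<and> 0 \<le> y" using dk by auto
  qed simp
  then show ?thesis unfolding k_def c_def r_def by simp
qed

lemma growth:
  assumes a: "a \<in> U" "a + u \<in> U"
  shows "f (a + u) - f a - G a u \<ge> Q a u u / (2 * (1 + M * sqrt (Q a u u)))"
proof -
  define c where "c = Q a u u"
  define r where "r = sqrt c"
  have c: "c \<ge> 0" using Q_nonneg[OF a(1)] c_def by simp
  have r: "r \<ge> 0" using c r_def by simp
  have pr: "1 + M * r > 0" using Mpos r by (simp add: add_pos_nonneg)
  define K where "K = c / (2 * (1 + M * r))"
  define k where "k \<tau> = f (a + \<tau> *\<^sub>R u) - G a u * \<tau> - K * \<tau>^2" for \<tau>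
  have "k 0 \<le> k 1"
  proof (rule DERIV_nonneg_imp_nondecreasing[of 0 1])
    fix x :: real assume x: "0 \<le> x" "x \<le> 1"
    have df: "((\<lambda>\<tau>. f (a + \<tau> *\<^sub>R u)) has_real_derivative G (a + x *\<^sub>R u) u) (at x)"
      by (rule line_deriv_real[OF d1[OF seg[OF a x]]])
    have dk0: "(k has_real_derivative (G (a + x *\<^sub>R u) u - G a u * 1 - K * (real 2 * x ^ (2 - Suc 0)))) (at x)"
      unfolding k_def by (rule DERIV_diff[OF DERIV_diff[OF df DERIV_cmult[OF DERIV_ident]] DERIV_cmult[OF DERIV_pow]])
    have dk: "(k has_real_derivative (G (a + x *\<^sub>R u) u - G a u - 2 * K * x)) (at x)"
      by (rule DERIV_cong[OF dk0]) simp
    have "G (a + x *\<^sub>R u) u - G a u \<ge> 2 * K * x"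
    proof (cases "x = 0")
      case True then show ?thesis by simp
    next
      case False
      then have xp: "x > 0" using x by simp
      have h0: "G (a + x *\<^sub>R u) (x *\<^sub>R u) - G a (x *\<^sub>R u) \<ge>
          Q a (x *\<^sub>R u) (x *\<^sub>R u) / (1 + M * sqrt (Q a (x *\<^sub>R u) (x *\<^sub>R u)))"
        using gradmono[OF a(1) seg[OF a x]] .
      have e1: "Q a (x *\<^sub>R u) (x *\<^sub>R u) = x^2 * c" unfolding c_def by (rule Q_scale)
      have e2: "sqrt (x^2 * c) = x * r" unfolding r_def using x by (simp add: real_sqrt_mult)
      have e3: "G (a + x *\<^sub>R u) (x *\<^sub>R u) - G a (x *\<^sub>R u) = x * (G (a + x *\<^sub>R u) u - G a u)"
        by (simp add: blinfun.scaleR_right right_diff_distrib)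
      have h1': "x * (G (a + x *\<^sub>R u) u - G a u) \<ge> x^2 * c / (1 + M * (x * r))"
        using h0 unfolding e1 e2 e3 .
      have eqx: "x^2 * c / (1 + M * (x * r)) = x * (x * c / (1 + M * (x * r)))" by (simp add: power2_eq_square)
      have h1: "x * (G (a + x *\<^sub>R u) u - G a u) \<ge> x * (x * c / (1 + M * (x * r)))"
        using h1' unfolding eqx .
      have h2: "G (a + x *\<^sub>R u) u - G a u \<ge> x * c / (1 + M * (x * r))"
        using h1 mult_le_cancel_left_pos[OF xp] by blast
      have h3: "x * c / (1 + M * r) \<le> x * c / (1 + M * (x * r))"
      proof (rule frac_le)
        show "0 \<le> x * c" using x c by simp
        show "0 < 1 + M * (x * r)" using Mpos r x by (simp add: add_pos_nonneg)
        show "1 + M * (x * r) \<le> 1 + M * r" using Mpos r x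
          by (simp add: mult_left_mono mult_left_le_one_le)
      qed simp
      have "2 * K * x = x * c / (1 + M * r)" unfolding K_def using pr by (simp add: field_simps)
      then show ?thesis using h2 h3 by linarith
    qed
    then show "\<exists>y. (k has_real_derivative y) (at x) \<and> 0 \<le> y" using dk by auto
  qed simp
  then show ?thesis unfolding k_def K_def c_def r_def by simp
qed

lemma grad_ineq:
  assumes a: "a \<in> U" "b \<in> U"
  shows "f b \<ge> f a + G a (b - a)"
proof -
  have "a + (b - a) \<in> U" using a by simp
  from growth[OF a(1) this] have "f b - f a - G a (b - a) \<ge> Q a (b - a) (b - a) / (2 * (1 + M * sqrt (Q a (b - a) (b - a))))"
    by simp
  moreover have "Q a (b - a) (b - a) / (2 * (1 + M * sqrt (Q a (b - a) (b - a)))) \<ge> 0"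
    using Q_nonneg[OF a(1)] Mpos by (simp add: add_pos_nonneg)
  ultimately show ?thesis by linarith
qed

end


lemma psi_fin:
  assumes "Gamma0 \<psi>" "x \<in> edom \<psi>"
  shows "\<psi> x = ereal (real_of_ereal (\<psi> x))"
proof -
  have "\<psi> x \<noteq> -\<infinity>" using assms(1) unfolding Gamma0_def proper_fun_def by blast
  moreover have "\<psi> x \<noteq> \<infinity>" using assms(2) unfolding edom_def by auto
  ultimately show ?thesis by (cases "\<psi> x") auto
qed

lemma psi_jensen:
  assumes "Gamma0 \<psi>" "\<psi> x = ereal a" "\<psi> z = ereal b" "0 \<le> t" "t \<le> 1"
  shows "\<psi> ((1 - t) *\<^sub>R x + t *\<^sub>R z) \<le> ereal ((1 - t) * a + t * b)"
proof -
  define S where "S = {(x, t::real). \<psi> x \<le> ereal t}"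
  have cS: "convex S" using assms(1) unfolding Gamma0_def convex_efun_def S_def by blast
  have "(x, a) \<in> S" "(z, b) \<in> S" using assms(2,3) unfolding S_def by auto
  from convexD[OF cS this, of "1 - t" t] assms(4,5)
  have "(1 - t) *\<^sub>R (x, a) + t *\<^sub>R (z, b) \<in> S" by simp
  then show ?thesis unfolding S_def by simp
qed

lemma edom_convex:
  assumes "Gamma0 \<psi>" shows "convex (edom \<psi>)"
proof (rule convexI)
  fix x z :: 'a and u v :: real
  assume x: "x \<in> edom \<psi>" and z: "z \<in> edom \<psi>" and uv: "0 \<le> u" "0 \<le> v" "u + v = 1"
  have "\<psi> ((1 - v) *\<^sub>R x + v *\<^sub>R z) \<le> ereal ((1 - v) * real_of_ereal (\<psi> x) + v * real_of_ereal (\<psi> z))"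
    using psi_jensen[OF assms psi_fin[OF assms x] psi_fin[OF assms z], of v] uv by simp
  moreover have "u = 1 - v" using uv by simp
  ultimately show "u *\<^sub>R x + v *\<^sub>R z \<in> edom \<psi>" unfolding edom_def
    using le_less_trans by fastforce
qed

lemma D1_as_inner:
  fixes L :: "'a::euclidean_space \<Rightarrow>\<^sub>L real"
  shows "blinfun_apply L = (\<lambda>h. inner h (\<Sum>b\<in>Basis. blinfun_apply L b *\<^sub>R b))"
proof
  fix h :: 'a
  have "blinfun_apply L h = blinfun_apply L (\<Sum>b\<in>Basis. (inner h b) *\<^sub>R b)"
    by (simp add: euclidean_representation)
  also have "\<dots> = (\<Sum>b\<in>Basis. inner h b * blinfun_apply L b)"
    by (simp add: blinfun.sum_right blinfun.scaleR_right)
  also have "\<dots> = inner h (\<Sum>b\<in>Basis. blinfun_apply L b *\<^sub>R b)"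
    by (simp add: inner_sum_right mult.commute)
  finally show "blinfun_apply L h = inner h (\<Sum>b\<in>Basis. blinfun_apply L b *\<^sub>R b)" .
qed

lemma egrad_D1:
  fixes \<psi> :: "'a::euclidean_space \<Rightarrow> ereal"
  assumes "((\<lambda>y. real_of_ereal (\<psi> y)) has_derivative blinfun_apply L) (at x)"
  shows "blinfun_apply L = (\<lambda>h. inner h (egrad \<psi> x))"
proof -
  have ex: "GDERIV (\<lambda>y. real_of_ereal (\<psi> y)) x :> (\<Sum>b\<in>Basis. blinfun_apply L b *\<^sub>R b)"
    unfolding gderiv_def using assms D1_as_inner[of L] by metis
  have "GDERIV (\<lambda>y. real_of_ereal (\<psi> y)) x :> egrad \<psi> x"
    unfolding egrad_def using someI[of "\<lambda>g. GDERIV (\<lambda>y. real_of_ereal (\<psi> y)) x :> g", OF ex] .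
  then show ?thesis unfolding gderiv_def using assms has_derivative_unique by blast
qed

lemma egrad_eq:
  fixes \<psi> :: "'a::euclidean_space \<Rightarrow> ereal"
  assumes "((\<lambda>y. real_of_ereal (\<psi> y)) has_derivative blinfun_apply L) (at x)"
  shows "egrad \<psi> x = (\<Sum>b\<in>Basis. blinfun_apply L b *\<^sub>R b)"
proof -
  have "egrad \<psi> x = (\<Sum>b\<in>Basis. inner (egrad \<psi> x) b *\<^sub>R b)" by (simp add: euclidean_representation)
  also have "\<dots> = (\<Sum>b\<in>Basis. blinfun_apply L b *\<^sub>R b)"
    using egrad_D1[OF assms] by (simp add: inner_commute)
  finally show ?thesis .
qed

lemma ehess_D2:
  fixes \<psi> :: "'a::euclidean_space \<Rightarrow> ereal"
  assumes U: "open U" "x \<in> U"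
    and d1: "\<And>z. z \<in> U \<Longrightarrow> ((\<lambda>y. real_of_ereal (\<psi> y)) has_derivative blinfun_apply (D1 z)) (at z)"
    and d2: "(D1 has_derivative blinfun_apply D2x) (at x)"
  shows "ehess \<psi> x = (\<lambda>v. \<Sum>b\<in>Basis. blinfun_apply (blinfun_apply D2x v) b *\<^sub>R b)"
proof -
  have h1: "((\<lambda>z. \<Sum>b\<in>Basis. blinfun_apply (D1 z) b *\<^sub>R b) has_derivative
      (\<lambda>v. \<Sum>b\<in>Basis. blinfun_apply (blinfun_apply D2x v) b *\<^sub>R b)) (at x)"
  proof (rule has_derivative_sum)
    fix b :: 'a assume "b \<in> Basis"
    have "((\<lambda>z. blinfun_apply (D1 z) b) has_derivative (\<lambda>v. blinfun_apply (blinfun_apply D2x v) b)) (at x)"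
      using bounded_linear.has_derivative[OF bounded_bilinear.bounded_linear_left[OF bounded_bilinear_blinfun_apply] d2] .
    then show "((\<lambda>z. blinfun_apply (D1 z) b *\<^sub>R b) has_derivative (\<lambda>v. blinfun_apply (blinfun_apply D2x v) b *\<^sub>R b)) (at x)"
      using bounded_linear.has_derivative[OF bounded_linear_scaleR_left] by blast
  qed
  have h2: "(egrad \<psi> has_derivative (\<lambda>v. \<Sum>b\<in>Basis. blinfun_apply (blinfun_apply D2x v) b *\<^sub>R b)) (at x)"
    by (rule has_derivative_transform_within_open[OF h1 U]) (simp add: egrad_eq[OF d1])
  have "(egrad \<psi> has_derivative ehess \<psi> x) (at x)"
    unfolding ehess_def using someI[of "\<lambda>H. (egrad \<psi> has_derivative H) (at x)", OF h2] .
  then show ?thesis using h2 has_derivative_unique by blast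
qed

lemma inner_hess:
  fixes D2x :: "'a::euclidean_space \<Rightarrow>\<^sub>L ('a \<Rightarrow>\<^sub>L real)"
  shows "inner u (\<Sum>b\<in>Basis. blinfun_apply (blinfun_apply D2x v) b *\<^sub>R b) = blinfun_apply (blinfun_apply D2x v) u"
  using D1_as_inner[of "blinfun_apply D2x v"] by (metis inner_commute)


locale psi_sc = scf +
  fixes \<psi> :: "'a \<Rightarrow> ereal"
  assumes G0: "Gamma0 \<psi>" and U_eq: "U = interior (edom \<psi>)" and f_eq: "f = (\<lambda>x. real_of_ereal (\<psi> x))"
    and lvl: "\<And>\<alpha>. closed {x\<in>U. f x \<le> \<alpha>}"
begin

lemma psiU: "x \<in> U \<Longrightarrow> \<psi> x = ereal (f x)"
  using psi_fin[OF G0, of x] interior_subset[of "edom \<psi>"] U_eq f_eq by auto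

lemma gradU: "x \<in> U \<Longrightarrow> G x h = inner h (egrad \<psi> x)"
  using egrad_D1[of \<psi> "D1 x" x] d1[of x] f_eq by (metis (no_types))

lemma conj_ge: "ereal (inner y x) - \<psi> x \<le> fconj \<psi> y"
  unfolding fconj_def by (rule SUP_upper) simp

lemma psi_not_minf: "\<psi> x \<noteq> -\<infinity>"
  using G0 unfolding Gamma0_def proper_fun_def by blast

lemma f_cont: "continuous_on U f"
  using d1 by (meson has_derivative_continuous continuous_at_imp_continuous_on)

lemma min_exists:
  assumes y: "y \<in> interior (edom (fconj \<psi>))" and s: "s \<in> U"
  shows "\<exists>xs\<in>U. \<forall>x\<in>U. f xs - inner y xs \<le> f x - inner y x"
proof -
  obtain \<delta> where \<delta>: "\<delta> > 0" "ball y \<delta> \<subseteq> edom (fconj \<psi>)" using y mem_interior by blast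
  define d where "d = \<delta> / 2"
  have d: "d > 0" unfolding d_def using \<delta> by simp
  define yy where "yy b \<sigma> = y + (\<sigma> * d) *\<^sub>R b" for b :: 'a and \<sigma> :: real
  have yy_fin: "fconj \<psi> (yy b \<sigma>) = ereal (real_of_ereal (fconj \<psi> (yy b \<sigma>)))"
    if "b \<in> Basis" "\<bar>\<sigma>\<bar> = 1" for b \<sigma>
  proof -
    have "dist y (yy b \<sigma>) = d" unfolding yy_def dist_norm using that d by (simp add: abs_mult)
    then have "yy b \<sigma> \<in> edom (fconj \<psi>)" using \<delta> d unfolding d_def by (auto simp: subset_iff)
    then have "fconj \<psi> (yy b \<sigma>) \<noteq> \<infinity>" unfolding edom_def by auto
    moreover have "fconj \<psi> (yy b \<sigma>) \<noteq> -\<infinity>"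
      using conj_ge[of "yy b \<sigma>" s] psiU[OF s] by auto
    ultimately show ?thesis by (cases "fconj \<psi> (yy b \<sigma>)") auto
  qed
  define P where "P b \<sigma> = real_of_ereal (fconj \<psi> (yy b \<sigma>))" for b \<sigma>
  have Pb: "inner y x + \<sigma> * d * inner b x - f x \<le> P b \<sigma>" if "x \<in> U" "b \<in> Basis" "\<bar>\<sigma>\<bar> = 1" for x b \<sigma>
  proof -
    have "ereal (inner (yy b \<sigma>) x) - ereal (f x) \<le> ereal (P b \<sigma>)"
      using conj_ge[of "yy b \<sigma>" x] psiU[OF that(1)] yy_fin[OF that(2,3)] unfolding P_def by simp
    then have "inner (yy b \<sigma>) x - f x \<le> P b \<sigma>" by simp
    then show ?thesis unfolding yy_def by (simp add: inner_add_left)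
  qed
  define C where "C = (\<Sum>b\<in>Basis. \<bar>P b 1\<bar> + \<bar>P b (-1)\<bar>)"
  have PC: "\<bar>P b 1\<bar> \<le> C" "\<bar>P b (-1)\<bar> \<le> C" if "b \<in> Basis" for b
  proof -
    have "\<bar>P b 1\<bar> + \<bar>P b (-1)\<bar> \<le> C" unfolding C_def
      by (rule member_le_sum[OF that]) auto
    then show "\<bar>P b 1\<bar> \<le> C" "\<bar>P b (-1)\<bar> \<le> C" by auto
  qed
  define \<alpha> where "\<alpha> = f s - inner y s"
  define R where "R = real DIM('a) * ((C + \<bar>\<alpha>\<bar>) / d)"
  have bnd: "norm x \<le> R" if x: "x \<in> U" "f x - inner y x \<le> \<alpha>" for x
  proof -
    have cb: "\<bar>inner x b\<bar> \<le> (C + \<bar>\<alpha>\<bar>) / d" if b: "b \<in> Basis" for b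
    proof -
      have 1: "d * inner b x \<le> C + \<bar>\<alpha>\<bar>" using Pb[OF x(1) b, of 1] PC[OF b] x(2) by simp
      have 2: "- (d * inner b x) \<le> C + \<bar>\<alpha>\<bar>" using Pb[OF x(1) b, of "-1"] PC[OF b] x(2) by simp
      have 3: "\<bar>d * inner b x\<bar> \<le> C + \<bar>\<alpha>\<bar>" unfolding abs_le_iff using 1 2 by blast
      have "d * \<bar>inner x b\<bar> = \<bar>d * inner b x\<bar>" using d by (simp add: abs_mult inner_commute)
      then have "d * \<bar>inner x b\<bar> \<le> C + \<bar>\<alpha>\<bar>" using 3 by simp
      then show ?thesis using d by (simp add: pos_le_divide_eq mult.commute)
    qed
    have "norm x \<le> (\<Sum>b\<in>Basis. \<bar>inner x b\<bar>)" by (rule norm_le_l1)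
    also have "\<dots> \<le> (\<Sum>b\<in>(Basis::'a set). (C + \<bar>\<alpha>\<bar>) / d)" by (rule sum_mono) (rule cb)
    also have "\<dots> = R" unfolding R_def by simp
    finally show ?thesis .
  qed
  define A where "A = {x\<in>U. f x \<le> \<alpha> + norm y * R}"
  have Acl: "closed A" unfolding A_def by (rule lvl)
  define L where "L = {x \<in> A \<inter> cball 0 R. f x - inner y x \<le> \<alpha>}"
  have LU: "L = {x\<in>U. f x - inner y x \<le> \<alpha>}"
  proof (intro set_eqI iffI)
    fix x assume "x \<in> {x\<in>U. f x - inner y x \<le> \<alpha>}"
    then have x: "x \<in> U" "f x - inner y x \<le> \<alpha>" by auto
    have nx: "norm x \<le> R" using bnd[OF x] .
    have "inner y x \<le> norm y * norm x" using Cauchy_Schwarz_ineq2[of y x] by simp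
    also have "\<dots> \<le> norm y * R" using nx by (simp add: mult_left_mono)
    finally show "x \<in> L" unfolding L_def A_def using x nx by auto
  qed (auto simp: L_def A_def)
  have cL: "closed L" unfolding L_def
  proof (rule continuous_on_closed_Collect_le)
    have "A \<inter> cball 0 R \<subseteq> U" unfolding A_def by auto
    then show "continuous_on (A \<inter> cball 0 R) (\<lambda>x. f x - inner y x)"
      by (intro continuous_intros continuous_on_subset[OF f_cont])
  qed (auto intro: Acl)
  have bL: "bounded L" unfolding L_def by (rule bounded_subset[of "cball 0 R"]) auto
  have kL: "compact L" using cL bL by (simp add: compact_eq_bounded_closed)
  have sL: "s \<in> L" unfolding LU \<alpha>_def using s by simp
  have "continuous_on L (\<lambda>x. f x - inner y x)"
    unfolding LU by (intro continuous_intros continuous_on_subset[OF f_cont]) auto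
  from continuous_attains_inf[OF kL _ this] sL obtain xs where xs: "xs \<in> L" "\<forall>x\<in>L. f xs - inner y xs \<le> f x - inner y x"
    by blast
  have "\<forall>x\<in>U. f xs - inner y xs \<le> f x - inner y x"
  proof
    fix x assume x: "x \<in> U"
    show "f xs - inner y xs \<le> f x - inner y x"
    proof (cases "x \<in> L")
      case True then show ?thesis using xs by blast
    next
      case False then have "f x - inner y x > \<alpha>" using x unfolding LU by auto
      moreover have "f xs - inner y xs \<le> \<alpha>" using xs(1) unfolding LU by auto
      ultimately show ?thesis by simp
    qed
  qed
  moreover have "xs \<in> U" using xs(1) unfolding LU by auto
  ultimately show ?thesis by blast
qed


lemma jensenU:
  assumes "\<psi> x = ereal v" "xs \<in> U" "0 \<le> t" "t \<le> 1" "xs + t *\<^sub>R (x - xs) \<in> U"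
  shows "f (xs + t *\<^sub>R (x - xs)) \<le> (1 - t) * f xs + t * v"
proof -
  have e: "xs + t *\<^sub>R (x - xs) = (1 - t) *\<^sub>R xs + t *\<^sub>R x" by (simp add: algebra_simps)
  have "\<psi> (xs + t *\<^sub>R (x - xs)) \<le> ereal ((1 - t) * f xs + t * v)"
    unfolding e by (rule psi_jensen[OF G0 psiU[OF assms(2)] assms(1) assms(3,4)])
  then show ?thesis using psiU[OF assms(5)] by simp
qed

lemma Q_lower:
  assumes x: "x \<in> U"
  shows "\<exists>lm>0. \<forall>u. Q x u u \<ge> lm * (norm u)^2"
proof -
  have cs: "compact (sphere (0::'a) 1)" by simp
  obtain b :: 'a where b: "b \<in> Basis" using nonempty_Basis by blast
  have ne: "sphere (0::'a) 1 \<noteq> {}" using b by (auto simp: sphere_def intro!: exI[of _ b])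
  have ct: "continuous_on (sphere 0 1) (\<lambda>u. Q x u u)" by (intro continuous_intros)
  obtain u0 where u0: "u0 \<in> sphere 0 1" "\<forall>u\<in>sphere 0 1. Q x u0 u0 \<le> Q x u u"
    using continuous_attains_inf[OF cs ne ct] by blast
  have u0n: "u0 \<noteq> 0" using u0(1) by auto
  define lm where "lm = Q x u0 u0"
  have lp: "lm > 0" unfolding lm_def using pd[OF x u0n] .
  show ?thesis
  proof (intro exI[of _ lm] conjI allI lp)
    fix u :: 'a
    show "Q x u u \<ge> lm * (norm u)^2"
    proof (cases "u = 0")
      case True then show ?thesis by (simp add: blinfun.zero_right blinfun.zero_left)
    next
      case False
      define w where "w = inverse (norm u) *\<^sub>R u"
      have w: "w \<in> sphere 0 1" unfolding w_def using False by simp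
      have uw: "u = norm u *\<^sub>R w" unfolding w_def using False by simp
      have "Q x u u = (norm u)^2 * Q x w w" by (subst uw, subst uw) (rule Q_scale)
      moreover have "Q x w w \<ge> lm" using u0(2) w unfolding lm_def by blast
      then have "lm * (norm u)^2 \<le> Q x w w * (norm u)^2" by (rule mult_right_mono[OF _ zero_le_power2])
      ultimately show ?thesis by (simp add: mult.commute)
    qed
  qed
qed

lemma Q_upper: "Q x u u \<le> norm (D2 x) * (norm u)^2"
proof -
  have "\<bar>Q x u u\<bar> \<le> norm (blinfun_apply (D2 x) u) * norm u" using norm_blinfun[of "blinfun_apply (D2 x) u" u] by simp
  also have "\<dots> \<le> norm (D2 x) * norm u * norm u" using norm_blinfun[of "D2 x" u] by (simp add: mult_right_mono)
  finally show ?thesis by (simp add: power2_eq_square mult.assoc)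
qed

lemma inner_all_eq:
  fixes a b :: "'b::real_inner"
  assumes "\<And>h. inner h a = inner h b" shows "a = b"
proof -
  have "inner (a - b) (a - b) = 0" using assms[of "a - b"] by (simp add: inner_diff_right)
  then show ?thesis by simp
qed

context
  fixes y xs
  assumes xs: "xs \<in> U" and xmin: "\<forall>x\<in>U. f xs - inner y xs \<le> f x - inner y x"
begin

lemma G_xs: "G xs h = inner y h"
proof -
  have der: "((\<lambda>x. f x - inner y x) has_derivative (\<lambda>h. G xs h - inner y h)) (at xs)"
    by (rule has_derivative_diff[OF d1[OF xs] bounded_linear_imp_has_derivative[OF bounded_linear_inner_right]])
  have ev: "eventually (\<lambda>z. f xs - inner y xs \<le> f z - inner y z) (at xs)"
    unfolding eventually_at_topological using U_open xs xmin by blast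
  from has_derivative_local_min[OF der ev] show ?thesis by (metis right_minus_eq)
qed

lemma egrad_xs: "egrad \<psi> xs = y"
  by (rule inner_all_eq) (metis G_xs gradU[OF xs] inner_commute)

lemma glob_min:
  assumes "\<psi> x = ereal v" shows "f xs - inner y xs \<le> v - inner y x"
proof (cases "x = xs")
  case True then show ?thesis using psiU[OF xs] assms by simp
next
  case False
  obtain r0 where r0: "r0 > 0" "ball xs r0 \<subseteq> U" using U_open xs open_contains_ball by blast
  define t where "t = min 1 (r0 / (2 * norm (x - xs)))"
  have nx: "norm (x - xs) > 0" using False by simp
  have t: "0 < t" "t \<le> 1" unfolding t_def using r0 nx by auto
  have "norm (t *\<^sub>R (x - xs)) = t * norm (x - xs)" using t by simp
  also have "\<dots> \<le> (r0 / (2 * norm (x - xs))) * norm (x - xs)" unfolding t_def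
    by (intro mult_right_mono) auto
  also have "\<dots> < r0" using nx r0 by simp
  finally have "xs + t *\<^sub>R (x - xs) \<in> U" using r0 by (auto simp: dist_norm subset_iff)
  note zU = this
  have j: "f (xs + t *\<^sub>R (x - xs)) \<le> (1 - t) * f xs + t * v"
    using jensenU[OF assms xs _ t(2) zU] t by simp
  have m: "f xs - inner y xs \<le> f (xs + t *\<^sub>R (x - xs)) - inner y (xs + t *\<^sub>R (x - xs))"
    using xmin zU by blast
  have "inner y (xs + t *\<^sub>R (x - xs)) = (1 - t) * inner y xs + t * inner y x"
    by (simp add: inner_add_right inner_diff_right algebra_simps)
  then have "t * (f xs - inner y xs) \<le> t * (v - inner y x)" using j m by (simp add: algebra_simps)
  then show ?thesis using t by simp
qed

lemma conj_y: "fconj \<psi> y = ereal (inner y xs - f xs)"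
proof (rule antisym)
  show "fconj \<psi> y \<le> ereal (inner y xs - f xs)"
    unfolding fconj_def
  proof (rule SUP_least)
    fix x
    show "ereal (inner y x) - \<psi> x \<le> ereal (inner y xs - f xs)"
    proof (cases "\<psi> x")
      case (real v) then show ?thesis using glob_min[OF real] by simp
    next
      case PInf then show ?thesis by simp
    next
      case MInf then show ?thesis using psi_not_minf by simp
    qed
  qed
  show "ereal (inner y xs - f xs) \<le> fconj \<psi> y" using conj_ge[of y xs] psiU[OF xs] by simp
qed


lemma growth_xs:
  "\<exists>c>0. \<exists>\<rho>>0. \<forall>x v. \<psi> x = ereal v \<longrightarrow>
     c * min ((norm (x - xs))^2) (\<rho> * norm (x - xs)) \<le> v - inner y x - (f xs - inner y xs)"
proof -
  obtain r0 where r0: "r0 > 0" "ball xs r0 \<subseteq> U" using U_open xs open_contains_ball by blast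
  define \<rho> where "\<rho> = r0 / 2"
  have \<rho>: "\<rho> > 0" unfolding \<rho>_def using r0 by simp
  have cb: "x \<in> U" if "norm (x - xs) \<le> \<rho>" for x
    using that r0 unfolding \<rho>_def by (auto simp: subset_iff dist_norm norm_minus_commute)
  obtain lm where lm: "lm > 0" "\<And>u. Q xs u u \<ge> lm * (norm u)^2" using Q_lower[OF xs] by blast
  define \<Lambda> where "\<Lambda> = norm (D2 xs)"
  have \<Lambda>: "\<Lambda> \<ge> 0" unfolding \<Lambda>_def by simp
  define K where "K = 2 * (1 + M * sqrt \<Lambda> * \<rho>)"
  have K: "K > 0" unfolding K_def using Mpos \<rho> \<Lambda> by (simp add: add_pos_nonneg)
  define c where "c = lm / K"
  have c: "c > 0" unfolding c_def using lm K by simp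
  have loc: "c * (norm (x - xs))^2 \<le> f x - inner y x - (f xs - inner y xs)" if xn: "norm (x - xs) \<le> \<rho>" for x
  proof -
    define u where "u = x - xs"
    have xu: "xs + u \<in> U" using cb[OF xn] unfolding u_def by simp
    have g: "f (xs + u) - f xs - G xs u \<ge> Q xs u u / (2 * (1 + M * sqrt (Q xs u u)))"
      by (rule growth[OF xs xu])
    have q0: "Q xs u u \<ge> 0" using Q_nonneg[OF xs] .
    have q1: "lm * (norm u)^2 \<le> Q xs u u" using lm(2) .
    have "sqrt (Q xs u u) \<le> sqrt (\<Lambda> * (norm u)^2)" unfolding \<Lambda>_def using Q_upper[of xs u] by simp
    also have "\<dots> = sqrt \<Lambda> * norm u" using \<Lambda> by (simp add: real_sqrt_mult)
    also have "\<dots> \<le> sqrt \<Lambda> * \<rho>" using xn \<Lambda> unfolding u_def by (intro mult_left_mono) auto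
    finally have q2: "sqrt (Q xs u u) \<le> sqrt \<Lambda> * \<rho>" .
    have "lm * (norm u)^2 / K \<le> Q xs u u / (2 * (1 + M * sqrt (Q xs u u)))"
    proof (rule frac_le[OF q0 q1])
      show "0 < 2 * (1 + M * sqrt (Q xs u u))" using Mpos q0 by (simp add: add_pos_nonneg)
      show "2 * (1 + M * sqrt (Q xs u u)) \<le> K" unfolding K_def using q2 Mpos
        by (simp add: mult_left_mono mult.assoc)
    qed
    moreover have "c * (norm u)^2 = lm * (norm u)^2 / K" unfolding c_def by simp
    moreover have "G xs u = inner y x - inner y xs" unfolding u_def G_xs by (simp add: inner_diff_right)
    ultimately show ?thesis using g unfolding u_def by simp
  qed
  have "\<forall>x v. \<psi> x = ereal v \<longrightarrow>
     c * min ((norm (x - xs))^2) (\<rho> * norm (x - xs)) \<le> v - inner y x - (f xs - inner y xs)"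
  proof (intro allI impI)
    fix x v assume psx: "\<psi> x = ereal v"
    define r where "r = norm (x - xs)"
    show "c * min ((norm (x - xs))^2) (\<rho> * norm (x - xs)) \<le> v - inner y x - (f xs - inner y xs)"
    proof (cases "r \<le> \<rho>")
      case True
      have v: "v = f x" using psiU[OF cb[OF True[unfolded r_def]]] psx by simp
      have "c * min ((norm (x - xs))^2) (\<rho> * norm (x - xs)) \<le> c * (norm (x - xs))^2"
        using c by (intro mult_left_mono) auto
      then show ?thesis using loc[OF True[unfolded r_def]] v by simp
    next
      case False
      then have rp: "r > 0" "\<rho> < r" using \<rho> by auto
      define t where "t = \<rho> / r"
      have t: "0 < t" "t \<le> 1" unfolding t_def using rp \<rho> by auto
      define z where "z = xs + t *\<^sub>R (x - xs)"
      have nz: "norm (z - xs) = \<rho>" unfolding z_def t_def r_def using rp \<rho> by (simp add: r_def)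
      have zU: "z \<in> U" using cb nz by simp
      have j: "f z \<le> (1 - t) * f xs + t * v" unfolding z_def
        using jensenU[OF psx xs _ t(2)] t zU unfolding z_def by simp
      have l: "c * \<rho>^2 \<le> f z - inner y z - (f xs - inner y xs)" using loc[of z] nz by simp
      have iz: "inner y z = (1 - t) * inner y xs + t * inner y x"
        unfolding z_def by (simp add: inner_add_right inner_diff_right algebra_simps)
      define W where "W = v - inner y x - (f xs - inner y xs)"
      have h1: "c * \<rho>^2 \<le> t * W" using l j iz unfolding W_def by (simp add: algebra_simps)
      have h2: "r * (c * \<rho>^2) \<le> r * (t * W)" using h1 rp by (simp add: mult_left_mono)
      have h3: "r * (t * W) = \<rho> * W" unfolding t_def using rp by simp
      have h4: "r * (c * \<rho>^2) = \<rho> * (c * (\<rho> * r))" by (simp add: power2_eq_square algebra_simps)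
      have "\<rho> * (c * (\<rho> * r)) \<le> \<rho> * W" using h2 h3 h4 by simp
      then have h5: "c * (\<rho> * r) \<le> W" using \<rho> by (simp add: mult_le_cancel_left_pos)
      have "c * min ((norm (x - xs))^2) (\<rho> * norm (x - xs)) \<le> c * (\<rho> * r)"
        using c unfolding r_def by (intro mult_left_mono) auto
      then show ?thesis using h5 unfolding W_def by simp
    qed
  qed
  then show ?thesis using c \<rho> by blast
qed



lemma aux_quad:
  fixes c \<epsilon> \<rho> r :: real
  assumes "0 < c" "0 \<le> \<epsilon>" "\<epsilon> \<le> c * \<rho>" "0 \<le> r" "0 < \<rho>"
  shows "\<epsilon> * r - c * min (r^2) (\<rho> * r) \<le> \<epsilon>^2 / (4 * c)"
proof (cases "r \<le> \<rho>")
  case True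
  then have "r^2 \<le> \<rho> * r" using assms by (simp add: power2_eq_square mult_right_mono)
  then have m: "min (r^2) (\<rho> * r) = r^2" by simp
  have "\<epsilon>^2 - 4 * c * (\<epsilon> * r - c * r^2) = (\<epsilon> - 2 * c * r)^2" by (simp add: power2_eq_square algebra_simps)
  moreover have "0 \<le> (\<epsilon> - 2 * c * r)^2" by simp
  ultimately have "4 * c * (\<epsilon> * r - c * r^2) \<le> \<epsilon>^2" by linarith
  then have "(\<epsilon> * r - c * r^2) \<le> \<epsilon>^2 / (4 * c)" using assms(1) by (simp add: pos_le_divide_eq mult.commute)
  then show ?thesis using m by simp
next
  case False
  then have "\<rho> * r \<le> r^2" using assms by (simp add: power2_eq_square mult_right_mono)
  then have m: "min (r^2) (\<rho> * r) = \<rho> * r" by simp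
  have "\<epsilon> * r - c * (\<rho> * r) = r * (\<epsilon> - c * \<rho>)" by (simp add: algebra_simps)
  also have "\<dots> \<le> 0" using assms by (simp add: mult_nonneg_nonpos)
  also have "0 \<le> \<epsilon>^2 / (4 * c)" using assms by simp
  finally show ?thesis using m by simp
qed

lemma conj_deriv:
  assumes yi: "y \<in> interior (edom (fconj \<psi>))"
  shows "((\<lambda>y'. real_of_ereal (fconj \<psi> y')) has_derivative (\<lambda>h. inner h xs)) (at y)"
proof -
  obtain c \<rho> where c: "c > 0" and \<rho>: "\<rho> > 0" and gr0: "\<forall>x v. \<psi> x = ereal v \<longrightarrow>
     c * min ((norm (x - xs))^2) (\<rho> * norm (x - xs)) \<le> v - inner y x - (f xs - inner y xs)"
    using growth_xs by (elim exE conjE) 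
  note gr = gr0[rule_format]
  obtain \<delta> where \<delta>: "\<delta> > 0" "ball y \<delta> \<subseteq> edom (fconj \<psi>)" using yi mem_interior by blast
  define F where "F y' = real_of_ereal (fconj \<psi> y')" for y'
  have Fy: "F y = inner y xs - f xs" unfolding F_def conj_y by simp
  have key: "0 \<le> F y' - F y - inner (y' - y) xs \<and> F y' - F y - inner (y' - y) xs \<le> (norm (y' - y))^2 / (4 * c)"
    if y': "norm (y' - y) < \<delta>" "norm (y' - y) \<le> c * \<rho>" for y'
  proof -
    define \<epsilon> where "\<epsilon> = norm (y' - y)"
    have up: "fconj \<psi> y' \<le> ereal (inner y' xs - f xs + \<epsilon>^2 / (4 * c))"
      unfolding fconj_def
    proof (rule SUP_least)
      fix x
      show "ereal (inner y' x) - \<psi> x \<le> ereal (inner y' xs - f xs + \<epsilon>^2 / (4 * c))"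
      proof (cases "\<psi> x")
        case (real v)
        define r where "r = norm (x - xs)"
        have g: "c * min (r^2) (\<rho> * r) \<le> v - inner y x - (f xs - inner y xs)" using gr[OF real] unfolding r_def .
        have cs: "inner (y' - y) (x - xs) \<le> \<epsilon> * r" unfolding \<epsilon>_def r_def
          using Cauchy_Schwarz_ineq2[of "y' - y" "x - xs"] by simp
        have aq: "\<epsilon> * r - c * min (r^2) (\<rho> * r) \<le> \<epsilon>^2 / (4 * c)"
          by (rule aux_quad) (use c \<rho> y' in \<open>auto simp: \<epsilon>_def r_def\<close>)
        have "inner y' x = inner y x + inner (y' - y) xs + inner (y' - y) (x - xs)"
          by (simp add: inner_diff_left inner_diff_right)
        moreover have "inner (y' - y) xs = inner y' xs - inner y xs" by (simp add: inner_diff_left)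
        ultimately have "inner y' x - v \<le> inner y' xs - f xs + \<epsilon>^2 / (4 * c)"
          using g cs aq by linarith
        then show ?thesis using real by simp
      next
        case PInf then show ?thesis by simp
      next
        case MInf then show ?thesis using psi_not_minf by simp
      qed
    qed
    have lo: "ereal (inner y' xs - f xs) \<le> fconj \<psi> y'" using conj_ge[of y' xs] psiU[OF xs] by simp
    have fin: "fconj \<psi> y' = ereal (F y')" unfolding F_def using up lo by (cases "fconj \<psi> y'") auto
    have "inner y' xs - f xs \<le> F y'" "F y' \<le> inner y' xs - f xs + \<epsilon>^2 / (4 * c)"
      using up lo unfolding fin by auto
    then show ?thesis unfolding Fy \<epsilon>_def by (simp add: inner_diff_left)
  qed
  have "(F has_derivative (\<lambda>h. inner h xs)) (at y)"
    unfolding has_derivative_at_alt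
  proof (intro conjI allI impI bounded_linear_inner_left)
    fix e :: real assume e: "e > 0"
    define d where "d = min \<delta> (min (c * \<rho>) (4 * c * e))"
    have d: "d > 0" unfolding d_def using \<delta> c \<rho> e by simp
    show "\<exists>d>0. \<forall>y'. norm (y' - y) < d \<longrightarrow> norm (F y' - F y - inner (y' - y) xs) \<le> e * norm (y' - y)"
    proof (intro exI[of _ d] conjI allI impI d)
      fix y' assume y': "norm (y' - y) < d"
      have k: "0 \<le> F y' - F y - inner (y' - y) xs" "F y' - F y - inner (y' - y) xs \<le> (norm (y' - y))^2 / (4 * c)"
        using key[of y'] y' unfolding d_def by auto
      have "(norm (y' - y))^2 / (4 * c) = norm (y' - y) * (norm (y' - y) / (4 * c))"
        by (simp add: power2_eq_square)
      also have "\<dots> \<le> norm (y' - y) * e"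
      proof (rule mult_left_mono)
        show "norm (y' - y) / (4 * c) \<le> e" using y' c unfolding d_def by (simp add: pos_divide_le_eq mult.commute)
      qed simp
      finally show "norm (F y' - F y - inner (y' - y) xs) \<le> e * norm (y' - y)"
        using k by (simp add: mult.commute)
    qed
  qed
  then show ?thesis unfolding F_def .
qed

lemma egrad_conj:
  assumes yi: "y \<in> interior (edom (fconj \<psi>))"
  shows "egrad (fconj \<psi>) y = xs"
  unfolding egrad_def
proof (rule some_equality)
  show "GDERIV (\<lambda>y. real_of_ereal (fconj \<psi> y)) y :> xs" unfolding gderiv_def using conj_deriv[OF yi] .
  fix g assume "GDERIV (\<lambda>y. real_of_ereal (fconj \<psi> y)) y :> g"
  then have hg: "((\<lambda>y. real_of_ereal (fconj \<psi> y)) has_derivative (\<lambda>h. inner h g)) (at y)"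
    unfolding gderiv_def .
  have "(\<lambda>h. inner h g) = (\<lambda>h. inner h xs)" by (rule has_derivative_unique[OF hg conj_deriv[OF yi]])
  then have "\<And>h. inner h g = inner h xs" by (simp add: fun_eq_iff)
  then show "g = xs" by (rule inner_all_eq)
qed

end

end


context scf begin

lemma Q_cs:
  assumes x: "x \<in> U"
  shows "(Q x a u)^2 \<le> Q x a a * Q x u u"
proof (cases "u = 0")
  case True then show ?thesis by (simp add: blinfun.zero_right blinfun.zero_left)
next
  case False
  define q where "q = Q x u u"
  have q: "q > 0" unfolding q_def using pd[OF x False] .
  define t where "t = Q x a u / q"
  have e: "Q x (a - t *\<^sub>R u) (a - t *\<^sub>R u) = Q x a a - t * Q x a u - t * Q x u a + t^2 * Q x u u"
    by (simp add: blinfun.diff_left blinfun.diff_right blinfun.scaleR_left blinfun.scaleR_right power2_eq_square algebra_simps)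
  have s: "Q x u a = Q x a u" using Qsym[OF x] .
  have "0 \<le> Q x (a - t *\<^sub>R u) (a - t *\<^sub>R u)" using Q_nonneg[OF x] .
  also have "\<dots> = Q x a a - t * Q x a u - t * Q x u a + t^2 * Q x u u" by (rule e)
  also have "\<dots> = Q x a a - (Q x a u)^2 / q" unfolding s t_def q_def[symmetric] using q
    by (simp add: power2_eq_square field_simps)
  finally have "(Q x a u)^2 / q \<le> Q x a a" by simp
  then show ?thesis using q unfolding q_def by (simp add: pos_divide_le_eq)
qed

end

theorem mainTheorem18:
  fixes \<psi> :: "'a::euclidean_space \<Rightarrow> ereal"
    and M :: real and s e :: 'a
  assumes "Gamma0 \<psi>"
    and "legendre \<psi>"
    and "strongly_self_concordant_on (interior (edom \<psi>)) (\<lambda>x. real_of_ereal (\<psi> x)) M"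
    and "M > 0"
    and "\<forall>x\<in>interior (edom \<psi>). \<forall>u. u \<noteq> 0 \<longrightarrow> inner u (ehess \<psi> x u) > 0"
    and "s \<in> interior (edom \<psi>)"
    and "egrad \<psi> s - e \<in> interior (edom (fconj \<psi>))"
    and "sqrt (inner e (inv (ehess \<psi> s) e)) < 1 / (3 * M)"
  shows "bregman \<psi> (egrad (fconj \<psi>) (egrad \<psi> s - e)) s \<le> ereal (2 * inner e (inv (ehess \<psi> s) e))"
proof -
  define U where "U = interior (edom \<psi>)"
  define f where "f = (\<lambda>x. real_of_ereal (\<psi> x))"
  have scU: "self_concordant_on U f M" and lvl: "\<And>\<alpha>. closed {x\<in>U. f x \<le> \<alpha>}"
    using assms(3) unfolding strongly_self_concordant_on_def U_def f_def by auto
  have oU: "open U" using scU unfolding self_concordant_on_def by blast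
  obtain D1 D2 D3 where H: "(\<forall>x\<in>U. (f has_derivative blinfun_apply (D1 x)) (at x)) \<and>
       (\<forall>x\<in>U. (D1 has_derivative blinfun_apply (D2 x)) (at x)) \<and>
       (\<forall>x\<in>U. (D2 has_derivative blinfun_apply (D3 x)) (at x)) \<and>
       continuous_on U D3 \<and>
       (\<forall>x\<in>U. \<forall>u. \<bar>blinfun_apply (blinfun_apply (blinfun_apply (D3 x) u) u) u\<bar>
            \<le> 2 * M * (blinfun_apply (blinfun_apply (D2 x) u) u) powr (3/2))"
    using scU unfolding self_concordant_on_def by blast
  have d1: "\<And>x. x \<in> U \<Longrightarrow> (f has_derivative blinfun_apply (D1 x)) (at x)" using H by blast
  have d2: "\<And>x. x \<in> U \<Longrightarrow> (D1 has_derivative blinfun_apply (D2 x)) (at x)" using H by blast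
  have d3: "\<And>x. x \<in> U \<Longrightarrow> (D2 has_derivative blinfun_apply (D3 x)) (at x)" using H by blast
  have scb: "\<And>x u. x \<in> U \<Longrightarrow> \<bar>blinfun_apply (blinfun_apply (blinfun_apply (D3 x) u) u) u\<bar>
            \<le> 2 * M * (blinfun_apply (blinfun_apply (D2 x) u) u) powr (3/2)" using H by blast
  have d1': "\<And>x. x \<in> U \<Longrightarrow> ((\<lambda>y. real_of_ereal (\<psi> y)) has_derivative blinfun_apply (D1 x)) (at x)"
    using d1 unfolding f_def .
  have hessU: "ehess \<psi> x = (\<lambda>v. \<Sum>b\<in>Basis. blinfun_apply (blinfun_apply (D2 x) v) b *\<^sub>R b)" if "x \<in> U" for x
    by (rule ehess_D2[OF oU that d1' d2[OF that]])
  have pdU: "\<And>x u. x \<in> U \<Longrightarrow> u \<noteq> 0 \<Longrightarrow> blinfun_apply (blinfun_apply (D2 x) u) u > 0"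
  proof -
    fix x u :: 'a assume x: "x \<in> U" and u: "u \<noteq> 0"
    have "inner u (ehess \<psi> x u) > 0" using assms(5) x u unfolding U_def by blast
    then show "blinfun_apply (blinfun_apply (D2 x) u) u > 0" unfolding hessU[OF x] inner_hess .
  qed
  have cU: "convex U" unfolding U_def by (rule convex_interior[OF edom_convex[OF assms(1)]])
  interpret psi_sc U f M D1 D2 D3 \<psi>
  proof (unfold_locales)
  qed (use oU cU assms(4) d1 d2 d3 scb pdU assms(1) lvl in \<open>auto simp: U_def f_def\<close>)
  define y where "y = egrad \<psi> s - e"
  have s: "s \<in> U" using assms(6) unfolding U_def .
  have yi: "y \<in> interior (edom (fconj \<psi>))" using assms(7) unfolding y_def .
  obtain xs where xs: "xs \<in> U" and xmin: "\<forall>x\<in>U. f xs - inner y xs \<le> f x - inner y x"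
    using min_exists[OF yi s] by blast
  have ec: "egrad (fconj \<psi>) y = xs" by (rule egrad_conj[OF xs xmin yi])
  have Gxs: "\<And>h. G xs h = inner y h" by (rule G_xs[OF xs xmin])
  have Gs: "\<And>h. G s h = inner h (egrad \<psi> s)" by (rule gradU[OF s])
  define H where "H = ehess \<psi> s"
  have Hs: "H = (\<lambda>v. \<Sum>b\<in>Basis. blinfun_apply (blinfun_apply (D2 s) v) b *\<^sub>R b)" unfolding H_def by (rule hessU[OF s])
  have Hin: "\<And>u v. inner u (H v) = Q s v u" unfolding Hs by (rule inner_hess)
  have linH: "linear H" unfolding Hs
    by (intro linearI) (simp_all add: blinfun.add_right blinfun.add_left blinfun.scaleR_right blinfun.scaleR_left
        scaleR_add_left sum.distrib scaleR_sum_right)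
  have injH: "inj H"
  proof (subst linear_injective_0[OF linH], intro allI impI)
    fix v assume "H v = 0"
    then have "Q s v v = 0" using Hin[of v v] by simp
    then show "v = 0" using pdU[OF s, of v] by fastforce
  qed
  have surjH: "surj H" by (rule linear_injective_imp_surjective[OF linH injH]) simp
  define a where "a = inv H e"
  have Ha: "H a = e" unfolding a_def by (rule surj_f_inv_f[OF surjH])
  define \<sigma>2 where "\<sigma>2 = inner e (inv H e)"
  have \<sigma>2: "\<sigma>2 = Q s a a" unfolding \<sigma>2_def a_def[symmetric] using Hin[of a a] Ha by (simp add: inner_commute)
  have \<sigma>2n: "\<sigma>2 \<ge> 0" using Q_nonneg[OF s, of a] \<sigma>2 by simp
  define \<sigma> where "\<sigma> = sqrt \<sigma>2"
  have \<sigma>n: "\<sigma> \<ge> 0" unfolding \<sigma>_def using \<sigma>2n by simp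
  have \<sigma>sq: "\<sigma> * \<sigma> = \<sigma>2" unfolding \<sigma>_def using \<sigma>2n by simp
  have \<sigma>M: "M * \<sigma> < 1 / 3" using assms(8) assms(4) unfolding \<sigma>_def \<sigma>2_def H_def
    by (simp add: pos_less_divide_eq mult.commute)
  define u where "u = xs - s"
  have xsu: "s + u \<in> U" unfolding u_def using xs by simp
  define r where "r = sqrt (Q s u u)"
  have rn: "r \<ge> 0" unfolding r_def using Q_nonneg[OF s, of u] by simp
  define P where "P = G xs u - G s u"
  have Pe: "P = - inner u e" unfolding P_def Gxs Gs y_def by (simp add: inner_diff_right inner_commute)
  have Pa: "P = - Q s a u" unfolding Pe using Hin[of u a] Ha by simp
  have su: "s + u = xs" unfolding u_def by simp
  have Plow: "P \<ge> Q s u u / (1 + M * r)" unfolding P_def r_def using gradmono[OF s xsu] unfolding su .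
  have "(Q s a u)^2 \<le> Q s a a * Q s u u" by (rule Q_cs[OF s])
  then have "sqrt ((Q s a u)^2) \<le> sqrt (Q s a a * Q s u u)" by (rule real_sqrt_le_mono)
  then have "\<bar>Q s a u\<bar> \<le> \<sigma> * r" unfolding \<sigma>_def r_def \<sigma>2 by (simp add: real_sqrt_mult)
  then have Pup: "P \<le> \<sigma> * r" unfolding Pa by linarith
  have key: "\<sigma> * r \<le> 2 * \<sigma>2"
  proof (cases "r = 0")
    case True then show ?thesis using \<sigma>2n by simp
  next
    case False
    then have rp: "r > 0" using rn by simp
    have p: "1 + M * r > 0" using assms(4) rn by (simp add: add_pos_nonneg)
    have qr: "Q s u u = r * r" unfolding r_def using Q_nonneg[OF s] by simp
    have "r * r / (1 + M * r) \<le> \<sigma> * r" using Plow Pup qr by simp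
    then have "r * r \<le> \<sigma> * r * (1 + M * r)" using p by (simp add: pos_divide_le_eq)
    then have "r * r \<le> r * (\<sigma> * (1 + M * r))" by (simp add: algebra_simps)
    then have r1: "r \<le> \<sigma> * (1 + M * r)" using rp by (simp add: mult_le_cancel_left_pos)
    have "M * \<sigma> * r \<le> (1/3) * r" using \<sigma>M rn by (intro mult_right_mono) auto
    then have "r \<le> \<sigma> + r / 3" using r1 by (simp add: algebra_simps)
    then have "r \<le> 3 / 2 * \<sigma>" by simp
    then have "\<sigma> * r \<le> \<sigma> * (3 / 2 * \<sigma>)" using \<sigma>n by (intro mult_left_mono)
    also have "\<dots> = 3 / 2 * \<sigma>2" using \<sigma>sq by (simp add: algebra_simps)
    also have "\<dots> \<le> 2 * \<sigma>2" using \<sigma>2n by simp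
    finally show ?thesis .
  qed
  have gi: "f s \<ge> f xs + G xs (s - xs)" by (rule grad_ineq[OF xs s])
  have "G xs (s - xs) = - G xs u" unfolding u_def by (simp add: blinfun.diff_right)
  then have B: "f xs - f s - G s u \<le> P" using gi unfolding P_def by simp
  have breg: "bregman \<psi> xs s = ereal (f xs - f s - G s u)"
    unfolding bregman_def psiU[OF xs] psiU[OF s] Gs u_def by (simp add: inner_commute)
  have "bregman \<psi> (egrad (fconj \<psi>) (egrad \<psi> s - e)) s = ereal (f xs - f s - G s u)"
    using ec breg unfolding y_def by simp
  also have "\<dots> \<le> ereal (2 * \<sigma>2)" using B Pup key by simp
  finally show ?thesis unfolding \<sigma>2_def H_def .
qed

end
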